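(* Let $G$ be a finite connected graph with node set $V$ and diameter $\operatorname{diam}(G)$. Algorithm 3 (described in the context), for any way of choosing the node $x$ in each iteration, terminates and outputs a node $b$ and a set $U$ such that $e(b)=\operatorname{diam}(G)$ and $U$ is a diameter certificate of $G$ with $|U|\le\pi_{1/3}$, using $O(\pi_{1/3})$ one-to-all distance queries. Here, for $\alpha>0$, $\pi_\alpha$ is the maximum size of a packing for the collection $\mathcal{D}_\alpha=\{B(u,\alpha(\operatorname{diam}(G)-e(u))):u\in V\}$. Moreover, $|U|\le\frac{\pi_{1/3}}{\pi_{[1]}}\cdot\kappa$, where $\kappa$ is the minimum size of a diameter certificate of $G$ and $\pi_{[1]}$ is the maximum size of a packing for $\mathcal{D}_{[1]}=\{B[u,\operatorname{diam}(G)-e(u)]:u\in V\}$.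
   Context: $G$ is undirected, unweighted, connected with finite node set $V$; $d$ is the shortest-path distance, $e(u)=\max_v d(u,v)$, $\operatorname{diam}(G)=\max_u e(u)$. Balls: $B[u,\rho]=\{v: d(u,v)\le\rho\}$, $B(u,\rho)=\{v:d(u,v)<\rho\}$. A packing for a collection $\mathcal{S}$ of subsets of $V$ is a set $P\subseteq V$ such that every set of $\mathcal{S}$ contains at most one element of $P$. For $U\subseteq V$ let $e^U(v)=\min_{x\in U}(d(v,x)+e(x))$ ($=+\infty$ if $U=\emptyset$). A diameter certificate is a set $U$ with $e^U(v)\le\operatorname{diam}(G)$ for all $v$. A one-to-all distance query from $x$ computes $(d(x,v))_{v\in V}$. Algorithm 3: start with $U=K=\emptyset$. Repeat: select $u$ with $e^U(u)$ maximal (ties arbitrary); query from $u$, compute $e(u)$, add $u$ to $K$; choose any node $x$ with $d(u,x)+e(x)=e(u)$ (e.g. $x=u$); query from $x$, compute $e(x)$, add $x$ to $U$ and update $e^U$. Stop as soon as $\max_{w\in K}e(w)\ge\max_{v\in V}e^U(v)$, and output $b\in K$ maximizing $e$ over $K$, together with $e(b)$ and $U$. *)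

theory Defs
  imports Main "HOL-Library.Extended_Nat"
begin

definition graph :: "'a set \<Rightarrow> ('a \<Rightarrow> 'a \<Rightarrow> bool) \<Rightarrow> bool" where
  "graph V E \<longleftrightarrow> finite V \<and> (\<forall>u v. E u v \<longrightarrow> u \<in> V \<and> v \<in> V)
     \<and> (\<forall>u v. E u v \<longrightarrow> E v u) \<and> (\<forall>u. \<not> E u u)"

definition walk :: "'a set \<Rightarrow> ('a \<Rightarrow> 'a \<Rightarrow> bool) \<Rightarrow> 'a list \<Rightarrow> bool" where
  "walk V E xs \<longleftrightarrow> xs \<noteq> [] \<and> set xs \<subseteq> V \<and>
     (\<forall>i. Suc i < length xs \<longrightarrow> E (xs ! i) (xs ! Suc i))"

definition connected_graph :: "'a set \<Rightarrow> ('a \<Rightarrow> 'a \<Rightarrow> bool) \<Rightarrow> bool" where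
  "connected_graph V E \<longleftrightarrow> V \<noteq> {} \<and>
     (\<forall>u\<in>V. \<forall>v\<in>V. \<exists>xs. walk V E xs \<and> hd xs = u \<and> last xs = v)"

definition gdist :: "'a set \<Rightarrow> ('a \<Rightarrow> 'a \<Rightarrow> bool) \<Rightarrow> 'a \<Rightarrow> 'a \<Rightarrow> nat" where
  "gdist V E u v = (LEAST n. \<exists>xs. walk V E xs \<and> hd xs = u \<and> last xs = v \<and> length xs = Suc n)"

definition ecc :: "'a set \<Rightarrow> ('a \<Rightarrow> 'a \<Rightarrow> bool) \<Rightarrow> 'a \<Rightarrow> nat" where
  "ecc V E u = Max (gdist V E u ` V)"

definition diam :: "'a set \<Rightarrow> ('a \<Rightarrow> 'a \<Rightarrow> bool) \<Rightarrow> nat" where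
  "diam V E = Max (ecc V E ` V)"

definition closed_ball :: "'a set \<Rightarrow> ('a \<Rightarrow> 'a \<Rightarrow> bool) \<Rightarrow> 'a \<Rightarrow> real \<Rightarrow> 'a set" where
  "closed_ball V E u r = {v \<in> V. real (gdist V E u v) \<le> r}"

definition open_ball :: "'a set \<Rightarrow> ('a \<Rightarrow> 'a \<Rightarrow> bool) \<Rightarrow> 'a \<Rightarrow> real \<Rightarrow> 'a set" where
  "open_ball V E u r = {v \<in> V. real (gdist V E u v) < r}"

definition packing :: "'a set \<Rightarrow> 'a set set \<Rightarrow> 'a set \<Rightarrow> bool" where
  "packing V S P \<longleftrightarrow> P \<subseteq> V \<and> (\<forall>A\<in>S. card (A \<inter> P) \<le> 1)"

definition D_open :: "'a set \<Rightarrow> ('a \<Rightarrow> 'a \<Rightarrow> bool) \<Rightarrow> real \<Rightarrow> 'a set set" where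
  "D_open V E \<alpha> = (\<lambda>u. open_ball V E u (\<alpha> * (real (diam V E) - real (ecc V E u)))) ` V"

definition D_closed1 :: "'a set \<Rightarrow> ('a \<Rightarrow> 'a \<Rightarrow> bool) \<Rightarrow> 'a set set" where
  "D_closed1 V E = (\<lambda>u. closed_ball V E u (real (diam V E) - real (ecc V E u))) ` V"

definition pi_open :: "'a set \<Rightarrow> ('a \<Rightarrow> 'a \<Rightarrow> bool) \<Rightarrow> real \<Rightarrow> nat" where
  "pi_open V E \<alpha> = Max (card ` {P. packing V (D_open V E \<alpha>) P})"

definition pi_closed1 :: "'a set \<Rightarrow> ('a \<Rightarrow> 'a \<Rightarrow> bool) \<Rightarrow> nat" where
  "pi_closed1 V E = Max (card ` {P. packing V (D_closed1 V E) P})"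

definition eU :: "'a set \<Rightarrow> ('a \<Rightarrow> 'a \<Rightarrow> bool) \<Rightarrow> 'a set \<Rightarrow> 'a \<Rightarrow> enat" where
  "eU V E U v = (if U = {} then \<infinity>
     else enat (Min ((\<lambda>x. gdist V E v x + ecc V E x) ` U)))"

definition diam_certificate :: "'a set \<Rightarrow> ('a \<Rightarrow> 'a \<Rightarrow> bool) \<Rightarrow> 'a set \<Rightarrow> bool" where
  "diam_certificate V E U \<longleftrightarrow> U \<subseteq> V \<and> (\<forall>v\<in>V. eU V E U v \<le> enat (diam V E))"

definition kappa :: "'a set \<Rightarrow> ('a \<Rightarrow> 'a \<Rightarrow> bool) \<Rightarrow> nat" where
  "kappa V E = Min (card ` {U. diam_certificate V E U})"

text \<open>Algorithm 3. State = (U, K). One iteration (two distance queries):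
  pick u maximising e^U over V (ties arbitrary), pick any x with d(u,x)+e(x)=e(u),
  add u to K and x to U.\<close>
definition alg_step :: "'a set \<Rightarrow> ('a \<Rightarrow> 'a \<Rightarrow> bool) \<Rightarrow> 'a set \<times> 'a set \<Rightarrow> 'a set \<times> 'a set \<Rightarrow> bool" where
  "alg_step V E s s' \<longleftrightarrow> (\<exists>u x. u \<in> V \<and> (\<forall>v\<in>V. eU V E (fst s) v \<le> eU V E (fst s) u)
     \<and> x \<in> V \<and> gdist V E u x + ecc V E x = ecc V E u
     \<and> s' = (insert x (fst s), insert u (snd s)))"

text \<open>Stopping test (checked after each iteration): max_{w in K} e(w) >= max_v e^U(v).\<close>
definition alg_stop :: "'a set \<Rightarrow> ('a \<Rightarrow> 'a \<Rightarrow> bool) \<Rightarrow> 'a set \<times> 'a set \<Rightarrow> bool" where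
  "alg_stop V E s \<longleftrightarrow> snd s \<noteq> {} \<and>
     Max (eU V E (fst s) ` V) \<le> enat (Max (ecc V E ` snd s))"

end

theory Submission
  imports Defs
begin


lemma walk_single[simp]: "walk V E [x] \<longleftrightarrow> x \<in> V"
  by (auto simp: walk_def)

lemma walk_Cons2[simp]: "walk V E (x # y # zs) \<longleftrightarrow> x \<in> V \<and> E x y \<and> walk V E (y # zs)"
proof
  assume w: "walk V E (x # y # zs)"
  then have s: "set (x # y # zs) \<subseteq> V" and e: "\<And>i. Suc i < length (x # y # zs) \<Longrightarrow> E ((x # y # zs) ! i) ((x # y # zs) ! Suc i)"
    unfolding walk_def by blast+
  have "E x y" using e[of 0] by simp
  moreover have "\<forall>i. Suc i < length (y # zs) \<longrightarrow> E ((y # zs) ! i) ((y # zs) ! Suc i)"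
  proof (intro allI impI)
    fix i assume "Suc i < length (y # zs)"
    then show "E ((y # zs) ! i) ((y # zs) ! Suc i)" using e[of "Suc i"] by simp
  qed
  ultimately show "x \<in> V \<and> E x y \<and> walk V E (y # zs)"
    using s unfolding walk_def by simp
next
  assume a: "x \<in> V \<and> E x y \<and> walk V E (y # zs)"
  have "\<forall>i. Suc i < length (x # y # zs) \<longrightarrow> E ((x # y # zs) ! i) ((x # y # zs) ! Suc i)"
  proof (intro allI impI)
    fix i assume i: "Suc i < length (x # y # zs)"
    show "E ((x # y # zs) ! i) ((x # y # zs) ! Suc i)"
    proof (cases i)
      case 0 then show ?thesis using a by simp
    next
      case (Suc k) then show ?thesis using a i unfolding walk_def by auto
    qed
  qed
  then show "walk V E (x # y # zs)" using a unfolding walk_def by auto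
qed

lemma walk_append: "walk V E xs \<Longrightarrow> walk V E ys \<Longrightarrow> last xs = hd ys \<Longrightarrow> walk V E (xs @ tl ys)"
proof (induction xs rule: induct_list012)
  case 1 then show ?case by (simp add: walk_def)
next
  case (2 x) then show ?case by (cases ys) (auto simp: walk_def)
next
  case (3 x y zs)
  then show ?case by auto
qed

lemma walk_rev: "walk V E xs \<Longrightarrow> graph V E \<Longrightarrow> walk V E (rev xs)"
proof (induction xs rule: induct_list012)
  case 1 then show ?case by (simp add: walk_def)
next
  case (2 x) then show ?case by simp
next
  case (3 x y zs)
  have w: "walk V E (rev (y # zs))" using 3 by auto
  have w2: "walk V E [y, x]" using 3 by (auto simp: graph_def walk_def)
  have "walk V E (rev (y # zs) @ tl [y, x])"
    by (rule walk_append[OF w w2]) simp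
  then show ?case by simp
qed

context
  fixes V :: "'a set" and E
  assumes G: "graph V E" and C: "connected_graph V E"
begin

lemma finV: "finite V" using G by (simp add: graph_def)
lemma neV: "V \<noteq> {}" using C by (simp add: connected_graph_def)

lemma gdist_obtain:
  assumes "u \<in> V" "v \<in> V"
  shows "\<exists>xs. walk V E xs \<and> hd xs = u \<and> last xs = v \<and> length xs = Suc (gdist V E u v)"
proof -
  obtain xs where xs: "walk V E xs" "hd xs = u" "last xs = v"
    using C assms unfolding connected_graph_def by blast
  then have "\<exists>n xs. walk V E xs \<and> hd xs = u \<and> last xs = v \<and> length xs = Suc n"
    using xs by (intro exI[of _ "length xs - 1"] exI[of _ xs]) (auto simp: walk_def)
  then show ?thesis unfolding gdist_def by (rule LeastI_ex)
qed

lemma gdist_le: assumes "walk V E xs" "hd xs = u" "last xs = v" shows "gdist V E u v \<le> length xs - 1"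
  unfolding gdist_def
  apply (rule Least_le) apply (rule exI[of _ xs]) using assms by (auto simp: walk_def)

lemma gdist_self: "u \<in> V \<Longrightarrow> gdist V E u u = 0"
  using gdist_le[of "[u]" u u] by simp

lemma gdist_sym: assumes "u \<in> V" "v \<in> V" shows "gdist V E u v = gdist V E v u"
proof -
  have "gdist V E v u \<le> gdist V E u v" if uv: "u \<in> V" "v \<in> V" for u v
  proof -
    obtain xs where xs: "walk V E xs" "hd xs = u" "last xs = v" "length xs = Suc (gdist V E u v)"
      using gdist_obtain[OF uv] by blast
    have "xs \<noteq> []" using xs by (simp add: walk_def)
    then have "gdist V E v u \<le> length (rev xs) - 1"
      using xs by (intro gdist_le walk_rev G) (auto simp: hd_rev last_rev)
    then show ?thesis using xs by simp
  qed
  then show ?thesis using assms by (meson le_antisym)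
qed

lemma gdist_tri: assumes "u \<in> V" "v \<in> V" "w \<in> V"
  shows "gdist V E u w \<le> gdist V E u v + gdist V E v w"
proof -
  obtain xs where xs: "walk V E xs" "hd xs = u" "last xs = v" "length xs = Suc (gdist V E u v)"
    using gdist_obtain[OF assms(1,2)] by blast
  obtain ys where ys: "walk V E ys" "hd ys = v" "last ys = w" "length ys = Suc (gdist V E v w)"
    using gdist_obtain[OF assms(2,3)] by blast
  have ne: "xs \<noteq> []" "ys \<noteq> []" using xs ys by (auto simp: walk_def)
  have w: "walk V E (xs @ tl ys)" using walk_append[OF xs(1) ys(1)] xs ys by simp
  have lst: "last (xs @ tl ys) = w"
  proof (cases "tl ys = []")
    case True
    then have "ys = [v]" using ne ys by (cases ys) auto
    then show ?thesis using xs ys by simp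
  next
    case False then show ?thesis using ys by (simp add: last_tl)
  qed
  have "gdist V E u w \<le> length (xs @ tl ys) - 1"
    by (rule gdist_le[OF w]) (use ne xs lst in simp_all)
  then show ?thesis using xs ys by simp
qed

lemma ecc_ge: "u \<in> V \<Longrightarrow> v \<in> V \<Longrightarrow> gdist V E u v \<le> ecc V E u"
  unfolding ecc_def using finV by (simp add: Max_ge)

lemma ecc_obtain: "u \<in> V \<Longrightarrow> \<exists>v\<in>V. ecc V E u = gdist V E u v"
proof -
  have "Max (gdist V E u ` V) \<in> gdist V E u ` V" using finV neV by (intro Max_in) auto
  then show ?thesis by (auto simp: ecc_def)
qed

lemma ecc_tri: assumes "v \<in> V" "x \<in> V" shows "ecc V E v \<le> gdist V E v x + ecc V E x"
proof -
  obtain y where y: "y \<in> V" "ecc V E v = gdist V E v y" using ecc_obtain assms by blast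
  have "gdist V E v y \<le> gdist V E v x + gdist V E x y" using gdist_tri assms y by blast
  also have "\<dots> \<le> gdist V E v x + ecc V E x" using ecc_ge assms y by simp
  finally show ?thesis using y by simp
qed

lemma ecc_le_diam: "u \<in> V \<Longrightarrow> ecc V E u \<le> diam V E"
  unfolding diam_def using finV by (simp add: Max_ge)

lemma diam_obtain: "\<exists>v\<in>V. ecc V E v = diam V E"
proof -
  have "Max (ecc V E ` V) \<in> ecc V E ` V" using finV neV by (intro Max_in) auto
  then show ?thesis by (auto simp: diam_def)
qed

lemma eU_le: "finite U \<Longrightarrow> x \<in> U \<Longrightarrow> eU V E U v \<le> enat (gdist V E v x + ecc V E x)"
  unfolding eU_def by auto

lemma eU_ge: assumes "finite U" "U \<subseteq> V" "v \<in> V" shows "enat (ecc V E v) \<le> eU V E U v"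
proof (cases "U = {}")
  case True then show ?thesis by (simp add: eU_def)
next
  case False
  have "ecc V E v \<le> Min ((\<lambda>x. gdist V E v x + ecc V E x) ` U)"
    using assms False ecc_tri by (auto simp: Min_ge_iff)
  then show ?thesis using False by (simp add: eU_def)
qed

lemma pi_open_ge: assumes "packing V (D_open V E a) P" shows "card P \<le> pi_open V E a"
proof -
  have "{P. packing V (D_open V E a) P} \<subseteq> Pow V" by (auto simp: packing_def)
  then have "finite {P. packing V (D_open V E a) P}" using finV by (meson finite_Pow_iff finite_subset)
  then show ?thesis unfolding pi_open_def using assms by (intro Max_ge) auto
qed

lemma pi_closed1_pos: "1 \<le> pi_closed1 V E"
proof -
  obtain v0 where v0: "v0 \<in> V" using neV by blast
  have fin: "finite {P. packing V (D_closed1 V E) P}"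
  proof -
    have "{P. packing V (D_closed1 V E) P} \<subseteq> Pow V" by (auto simp: packing_def)
    then show ?thesis using finV by (meson finite_Pow_iff finite_subset)
  qed
  have "card (A \<inter> {v0}) \<le> 1" for A :: "'a set"
    using card_mono[of "{v0}" "A \<inter> {v0}"] by auto
  then have "packing V (D_closed1 V E) {v0}" using v0 by (auto simp: packing_def)
  then have "card {v0} \<in> card ` {P. packing V (D_closed1 V E) P}" by blast
  then have "card {v0} \<le> pi_closed1 V E" unfolding pi_closed1_def using fin by (intro Max_ge) auto
  then show ?thesis by simp
qed

lemma pi_closed1_le_kappa: "pi_closed1 V E \<le> kappa V E"
proof -
  have finP: "finite {P. packing V (D_closed1 V E) P}"
  proof -
    have "{P. packing V (D_closed1 V E) P} \<subseteq> Pow V" by (auto simp: packing_def)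
    then show ?thesis using finV by (meson finite_Pow_iff finite_subset)
  qed
  have "packing V (D_closed1 V E) {}" by (auto simp: packing_def)
  then have "pi_closed1 V E \<in> card ` {P. packing V (D_closed1 V E) P}"
    unfolding pi_closed1_def using finP by (intro Max_in) auto
  then obtain P0 where P0: "packing V (D_closed1 V E) P0" "card P0 = pi_closed1 V E" by auto
  have finU: "finite {U. diam_certificate V E U}"
  proof -
    have "{U. diam_certificate V E U} \<subseteq> Pow V" by (auto simp: diam_certificate_def)
    then show ?thesis using finV by (meson finite_Pow_iff finite_subset)
  qed
  have "diam_certificate V E V"
  proof -
    have "eU V E V v \<le> enat (diam V E)" if "v \<in> V" for v
    proof -
      have "eU V E V v \<le> enat (gdist V E v v + ecc V E v)" using eU_le finV that by blast
      also have "\<dots> \<le> enat (diam V E)" using gdist_self ecc_le_diam that by simp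
      finally show ?thesis .
    qed
    then show ?thesis by (auto simp: diam_certificate_def)
  qed
  then have "kappa V E \<in> card ` {U. diam_certificate V E U}"
    unfolding kappa_def using finU by (intro Min_in) auto
  then obtain U0 where U0: "diam_certificate V E U0" "card U0 = kappa V E" by auto
  have U0V: "U0 \<subseteq> V" and U0c: "\<And>v. v \<in> V \<Longrightarrow> eU V E U0 v \<le> enat (diam V E)"
    using U0 by (auto simp: diam_certificate_def)
  have finU0: "finite U0" using U0V finV finite_subset by blast
  have U0ne: "U0 \<noteq> {}"
  proof
    assume "U0 = {}"
    obtain v0 where "v0 \<in> V" using neV by blast
    then show False using U0c[of v0] \<open>U0 = {}\<close> by (simp add: eU_def)
  qed
  have P0V: "P0 \<subseteq> V" using P0 by (simp add: packing_def)
  have "\<forall>p\<in>P0. \<exists>x. x \<in> U0 \<and> gdist V E p x + ecc V E x \<le> diam V E"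
  proof
    fix p assume p: "p \<in> P0"
    have "Min ((\<lambda>x. gdist V E p x + ecc V E x) ` U0) \<in> (\<lambda>x. gdist V E p x + ecc V E x) ` U0"
      using finU0 U0ne by (intro Min_in) auto
    then obtain x where x: "x \<in> U0" "Min ((\<lambda>x. gdist V E p x + ecc V E x) ` U0) = gdist V E p x + ecc V E x" by auto
    have "eU V E U0 p \<le> enat (diam V E)" using U0c p P0V by auto
    then have "gdist V E p x + ecc V E x \<le> diam V E" using x U0ne by (simp add: eU_def)
    then show "\<exists>x. x \<in> U0 \<and> gdist V E p x + ecc V E x \<le> diam V E" using x by blast
  qed
  then obtain f where f: "\<forall>p\<in>P0. f p \<in> U0 \<and> gdist V E p (f p) + ecc V E (f p) \<le> diam V E"
    by (rule bchoice[THEN exE]) blast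
  have "inj_on f P0"
  proof (rule inj_onI)
    fix p q assume p: "p \<in> P0" and q: "q \<in> P0" and eq: "f p = f q"
    define x where "x = f p"
    have "x \<in> U0" using f p unfolding x_def by blast
    then have xV: "x \<in> V" using U0V by blast
    define B where "B = closed_ball V E x (real (diam V E) - real (ecc V E x))"
    have "B \<in> D_closed1 V E" unfolding B_def D_closed1_def using xV by blast
    then have c: "card (B \<inter> P0) \<le> 1" using P0 by (simp add: packing_def)
    have pB: "p \<in> B"
    proof -
      have "gdist V E p x + ecc V E x \<le> diam V E" using f p x_def by blast
      moreover have "gdist V E x p = gdist V E p x" using gdist_sym[OF xV] p P0V by blast
      ultimately show ?thesis using p P0V unfolding B_def closed_ball_def by auto
    qed
    have qB: "q \<in> B"
    proof -
      have "gdist V E q x + ecc V E x \<le> diam V E" using f q unfolding x_def eq by blast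
      moreover have "gdist V E x q = gdist V E q x" using gdist_sym[OF xV] q P0V by blast
      ultimately show ?thesis using q P0V unfolding B_def closed_ball_def by auto
    qed
    have "finite (B \<inter> P0)" using finV P0V by (meson finite_Int finite_subset)
    then show "p = q" using c pB qB p q card_le_Suc0_iff_eq[of "B \<inter> P0"] by auto
  qed
  then have "card P0 \<le> card U0" using f finU0 by (intro card_inj_on_le) auto
  then show ?thesis using P0 U0 by simp
qed

lemma alg_correct:
  assumes r0: "run 0 = ({}, {})"
  and rs: "\<forall>i. \<not> alg_stop V E (run i) \<longrightarrow> alg_step V E (run i) (run (Suc i))"
  shows "\<exists>n. alg_stop V E (run n) \<and> (\<forall>m<n. \<not> alg_stop V E (run m)) \<and>
          (let U = fst (run n); K = snd (run n) in
             (\<forall>b\<in>K. (\<forall>w\<in>K. ecc V E w \<le> ecc V E b) \<longrightarrow> ecc V E b = diam V E)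
           \<and> diam_certificate V E U
           \<and> card U \<le> pi_open V E (1/3)
           \<and> real (2 * n) \<le> 2 * real (pi_open V E (1/3))
           \<and> real (card U) \<le> real (pi_open V E (1/3)) / real (pi_closed1 V E) * real (kappa V E))"
proof -
  define Q where "Q i u x \<longleftrightarrow> u \<in> V \<and> (\<forall>v\<in>V. eU V E (fst (run i)) v \<le> eU V E (fst (run i)) u)
     \<and> x \<in> V \<and> gdist V E u x + ecc V E x = ecc V E u
     \<and> run (Suc i) = (insert x (fst (run i)), insert u (snd (run i)))" for i u x
  have "\<forall>i. \<exists>p. \<not> alg_stop V E (run i) \<longrightarrow> Q i (fst p) (snd p)"
  proof
    fix i
    show "\<exists>p. \<not> alg_stop V E (run i) \<longrightarrow> Q i (fst p) (snd p)"
    proof (cases "alg_stop V E (run i)")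
      case True then show ?thesis by blast
    next
      case False
      then have "alg_step V E (run i) (run (Suc i))" using rs by blast
      then obtain u x where "Q i u x" unfolding alg_step_def Q_def by blast
      then show ?thesis by (intro exI[of _ "(u, x)"]) simp
    qed
  qed
  then obtain f where f: "\<forall>i. \<not> alg_stop V E (run i) \<longrightarrow> Q i (fst (f i)) (snd (f i))"
    by (rule choice[THEN exE]) blast
  define uu where "uu i = fst (f i)" for i
  define xx where "xx i = snd (f i)" for i
  have Qi: "\<And>i. \<not> alg_stop V E (run i) \<Longrightarrow> Q i (uu i) (xx i)" using f uu_def xx_def by simp
  have runeq: "(\<forall>m<i. \<not> alg_stop V E (run m)) \<Longrightarrow> run i = (xx ` {..<i}, uu ` {..<i})" for i
  proof (induction i)
    case 0 then show ?case using r0 by simp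
  next
    case (Suc i)
    then have ns: "\<not> alg_stop V E (run i)" and IH: "run i = (xx ` {..<i}, uu ` {..<i})" by auto
    have "run (Suc i) = (insert (xx i) (fst (run i)), insert (uu i) (snd (run i)))"
      using Qi[OF ns] by (simp add: Q_def)
    then show ?case using IH by (simp add: lessThan_Suc)
  qed
  have uuV: "\<And>i. \<not> alg_stop V E (run i) \<Longrightarrow> uu i \<in> V" using Qi by (simp add: Q_def)
  have xxV: "\<And>i. \<not> alg_stop V E (run i) \<Longrightarrow> xx i \<in> V" using Qi by (simp add: Q_def)
  obtain vs where vs: "vs \<in> V" "ecc V E vs = diam V E" using diam_obtain by blast
  have key: "enat (diam V E) \<le> eU V E (xx ` {..<i}) (uu i)
          \<and> eU V E (xx ` {..<i}) (uu i) \<le> enat (gdist V E (uu i) (uu j) + ecc V E (uu j))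
          \<and> enat (ecc V E (uu j)) < eU V E (xx ` {..<i}) (uu i)"
    if ns: "\<forall>m<n. \<not> alg_stop V E (run m)" and ji: "j < i" and "i < n" for n i j
  proof -
    have nsi: "\<not> alg_stop V E (run i)" using ns \<open>i < n\<close> by blast
    have nsj: "\<not> alg_stop V E (run j)" using ns \<open>i < n\<close> ji by simp
    have ri: "run i = (xx ` {..<i}, uu ` {..<i})" using runeq ns \<open>i < n\<close> by simp
    define U where "U = xx ` {..<i}"
    have finU: "finite U" unfolding U_def by simp
    have UV: "U \<subseteq> V" unfolding U_def using xxV ns \<open>i < n\<close> by auto
    have Q: "Q i (uu i) (xx i)" using Qi nsi by blast
    have maxu: "\<And>v. v \<in> V \<Longrightarrow> eU V E U v \<le> eU V E U (uu i)" using Q ri unfolding Q_def U_def by simp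
    have ui: "uu i \<in> V" using uuV nsi by blast
    have uj: "uu j \<in> V" using uuV nsj by blast
    have xj: "xx j \<in> V" using xxV nsj by blast
    have Qj: "Q j (uu j) (xx j)" using Qi nsj by blast
    have xje: "gdist V E (uu j) (xx j) + ecc V E (xx j) = ecc V E (uu j)" using Qj by (simp add: Q_def)
    have a: "enat (diam V E) \<le> eU V E U (uu i)"
      using eU_ge[OF finU UV vs(1)] maxu[OF vs(1)] vs(2) by simp
    have "eU V E U (uu i) \<le> enat (gdist V E (uu i) (xx j) + ecc V E (xx j))"
      using eU_le[OF finU, of "xx j"] ji unfolding U_def by simp
    also have "gdist V E (uu i) (xx j) \<le> gdist V E (uu i) (uu j) + gdist V E (uu j) (xx j)"
      using gdist_tri[OF ui uj xj] .
    then have "enat (gdist V E (uu i) (xx j) + ecc V E (xx j)) \<le> enat (gdist V E (uu i) (uu j) + ecc V E (uu j))"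
      using xje by simp
    finally have b: "eU V E U (uu i) \<le> enat (gdist V E (uu i) (uu j) + ecc V E (uu j))" .
    define K where "K = uu ` {..<i}"
    have Kne: "K \<noteq> {}" using ji unfolding K_def by auto
    have "\<not> (Max (eU V E U ` V) \<le> enat (Max (ecc V E ` K)))"
      using nsi ri Kne unfolding alg_stop_def U_def K_def by simp
    moreover have "Max (eU V E U ` V) = eU V E U (uu i)"
      using ui maxu finV by (intro Max_eqI) auto
    moreover have "ecc V E (uu j) \<le> Max (ecc V E ` K)"
      using ji unfolding K_def by (intro Max_ge) auto
    ultimately have c: "enat (ecc V E (uu j)) < eU V E U (uu i)" by (metis enat_ord_simps(1) order.trans not_le)
    show ?thesis using a b c unfolding U_def by blast
  qed
  have neq: "uu i \<noteq> uu j"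
    if ns: "\<forall>m<n. \<not> alg_stop V E (run m)" and ji: "j < i" and "i < n" for n i j
  proof
    assume eq: "uu i = uu j"
    have uj: "uu j \<in> V" using uuV ns ji \<open>i < n\<close> by simp
    have "enat (ecc V E (uu j)) < enat (gdist V E (uu i) (uu j) + ecc V E (uu j))"
      using key[OF ns ji \<open>i < n\<close>] by (meson order.strict_trans2)
    then show False using eq gdist_self[OF uj] by simp
  qed
  have inj: "inj_on uu {..<n}" if ns: "\<forall>m<n. \<not> alg_stop V E (run m)" for n
  proof (rule inj_onI)
    fix i j assume "i \<in> {..<n}" "j \<in> {..<n}" "uu i = uu j"
    then show "i = j" using neq[OF ns] by (metis lessThan_iff linorder_neqE_nat)
  qed
  have "\<exists>n. alg_stop V E (run n)"
  proof (rule ccontr)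
    assume "\<not> (\<exists>n. alg_stop V E (run n))"
    then have ns: "\<forall>m<Suc (card V). \<not> alg_stop V E (run m)" by blast
    have "card {..<Suc (card V)} \<le> card V"
      using inj[OF ns] uuV ns finV by (intro card_inj_on_le) auto
    then show False by simp
  qed
  then obtain n where st: "alg_stop V E (run n)" and ns: "\<forall>m<n. \<not> alg_stop V E (run m)"
  proof -
    assume th: "\<And>n. alg_stop V E (run n) \<Longrightarrow> \<forall>m<n. \<not> alg_stop V E (run m) \<Longrightarrow> thesis"
    assume ex: "\<exists>n. alg_stop V E (run n)"
    show thesis
      by (rule th[of "LEAST n. alg_stop V E (run n)"]) (use LeastI_ex[OF ex] not_less_Least in auto)
  qed
  have rn: "run n = (xx ` {..<n}, uu ` {..<n})" using runeq ns by simp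
  define U where "U = xx ` {..<n}"
  define K where "K = uu ` {..<n}"
  have finU: "finite U" "finite K" unfolding U_def K_def by simp_all
  have UV: "U \<subseteq> V" unfolding U_def using xxV ns by auto
  have KV: "K \<subseteq> V" unfolding K_def using uuV ns by auto
  have Kne: "K \<noteq> {}" and stop2: "Max (eU V E U ` V) \<le> enat (Max (ecc V E ` K))"
    using st rn unfolding alg_stop_def U_def K_def by simp_all
  have maxK: "Max (ecc V E ` K) \<le> diam V E"
    using Kne finU KV ecc_le_diam by (subst Max_le_iff) auto
  have eUle: "eU V E U v \<le> enat (Max (ecc V E ` K))" if "v \<in> V" for v
    using stop2 that finV by (meson Max_ge finite_imageI image_eqI order.trans)
  have p1: "\<forall>b\<in>K. (\<forall>w\<in>K. ecc V E w \<le> ecc V E b) \<longrightarrow> ecc V E b = diam V E"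
  proof (intro ballI impI)
    fix b assume b: "b \<in> K" and bm: "\<forall>w\<in>K. ecc V E w \<le> ecc V E b"
    have "Max (ecc V E ` K) = ecc V E b" using b bm finU by (intro Max_eqI) auto
    moreover have "enat (diam V E) \<le> eU V E U vs" using eU_ge[OF finU(1) UV vs(1)] vs(2) by simp
    ultimately have "diam V E \<le> ecc V E b" using eUle[OF vs(1)] by (metis enat_ord_simps(1) order.trans)
    then show "ecc V E b = diam V E" using ecc_le_diam b KV by (meson le_antisym subsetD)
  qed
  have p2: "diam_certificate V E U"
    unfolding diam_certificate_def using UV eUle maxK by (meson enat_ord_simps(1) order.trans)
  have cardK: "card K = n" unfolding K_def using inj[OF ns] by (simp add: card_image)
  have cardU: "card U \<le> n" unfolding U_def by (metis card_image_le card_lessThan finite_lessThan)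
  have pack: "packing V (D_open V E (1/3)) K"
    unfolding packing_def
  proof (intro conjI ballI)
    show "K \<subseteq> V" by (rule KV)
    fix A assume "A \<in> D_open V E (1/3)"
    then obtain w where w: "w \<in> V" and A: "A = open_ball V E w (1/3 * (real (diam V E) - real (ecc V E w)))"
      unfolding D_open_def by blast
    have contra: False if ji: "j < i" and "i < n" and ia: "uu i \<in> A" and ja: "uu j \<in> A" for i j
    proof -
      have k: "enat (diam V E) \<le> enat (gdist V E (uu i) (uu j) + ecc V E (uu j))"
        using key[OF ns ji \<open>i < n\<close>] by (meson order.trans)
      have ui: "uu i \<in> V" and uj: "uu j \<in> V" using ia ja A by (auto simp: open_ball_def)
      have t1: "gdist V E (uu i) (uu j) \<le> gdist V E w (uu i) + gdist V E w (uu j)"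
        using gdist_tri[OF ui w uj] gdist_sym[OF ui w] by simp
      have t2: "ecc V E (uu j) \<le> gdist V E w (uu j) + ecc V E w"
        using ecc_tri[OF uj w] gdist_sym[OF uj w] by simp
      have di: "real (gdist V E w (uu i)) < 1/3 * (real (diam V E) - real (ecc V E w))"
        using ia A by (simp add: open_ball_def)
      have dj: "real (gdist V E w (uu j)) < 1/3 * (real (diam V E) - real (ecc V E w))"
        using ja A by (simp add: open_ball_def)
      have "diam V E \<le> gdist V E w (uu i) + 2 * gdist V E w (uu j) + ecc V E w"
        using k t1 t2 by simp
      then have "real (diam V E) \<le> real (gdist V E w (uu i)) + 2 * real (gdist V E w (uu j)) + real (ecc V E w)"
        by linarith
      then show False using di dj by (simp add: field_simps)
    qed
    have "finite (A \<inter> K)" using finU by simp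
    moreover have "\<forall>a1\<in>A \<inter> K. \<forall>a2\<in>A \<inter> K. a1 = a2"
    proof (intro ballI)
      fix a1 a2 assume a1: "a1 \<in> A \<inter> K" and a2: "a2 \<in> A \<inter> K"
      then obtain i j where i: "i < n" "a1 = uu i" and j: "j < n" "a2 = uu j" unfolding K_def by auto
      show "a1 = a2"
      proof (cases i j rule: linorder_cases)
        case less then show ?thesis using contra[of i j] i j a1 a2 by blast
      next
        case equal then show ?thesis using i j by simp
      next
        case greater then show ?thesis using contra[of j i] i j a1 a2 by blast
      qed
    qed
    ultimately show "card (A \<inter> K) \<le> 1" using card_le_Suc0_iff_eq[of "A \<inter> K"] by simp
  qed
  have npi: "n \<le> pi_open V E (1/3)" using pi_open_ge[OF pack] cardK by simp
  have p3: "card U \<le> pi_open V E (1/3)" using cardU npi by simp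
  have p4: "real (2 * n) \<le> 2 * real (pi_open V E (1/3))" using npi by simp
  have p5: "real (card U) \<le> real (pi_open V E (1/3)) / real (pi_closed1 V E) * real (kappa V E)"
  proof -
    have pos: "0 < real (pi_closed1 V E)" using pi_closed1_pos by simp
    have "card U * pi_closed1 V E \<le> pi_open V E (1/3) * kappa V E"
      using p3 pi_closed1_le_kappa by (simp add: mult_le_mono)
    then have "real (card U) * real (pi_closed1 V E) \<le> real (pi_open V E (1/3)) * real (kappa V E)"
      by (metis of_nat_le_iff of_nat_mult)
    then show ?thesis using pos by (simp add: field_simps)
  qed
  show ?thesis
    using st ns p1 p2 p3 p4 p5 rn unfolding U_def K_def Let_def by (intro exI[of _ n]) simp
qed

end

theorem theorem4:
  shows "\<exists>c::real. \<forall>(V::nat set) (E::nat \<Rightarrow> nat \<Rightarrow> bool).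
    graph V E \<and> connected_graph V E \<longrightarrow>
    (\<forall>run :: nat \<Rightarrow> nat set \<times> nat set.
       run 0 = ({}, {}) \<and>
       (\<forall>i. \<not> alg_stop V E (run i) \<longrightarrow> alg_step V E (run i) (run (Suc i))) \<longrightarrow>
       (\<exists>n. alg_stop V E (run n) \<and> (\<forall>m<n. \<not> alg_stop V E (run m)) \<and>
          (let U = fst (run n); K = snd (run n) in
             (\<forall>b\<in>K. (\<forall>w\<in>K. ecc V E w \<le> ecc V E b) \<longrightarrow> ecc V E b = diam V E)
           \<and> diam_certificate V E U
           \<and> card U \<le> pi_open V E (1/3)
           \<and> real (2 * n) \<le> c * real (pi_open V E (1/3))
           \<and> real (card U) \<le> real (pi_open V E (1/3)) / real (pi_closed1 V E) * real (kappa V E))))"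
  apply (rule exI[of _ 2])
  apply (intro allI impI)
  apply (elim conjE)
  apply (rule alg_correct)
     apply assumption+
  done

end
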